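(* If $\mu>-\frac{3}{2}$ and $|\mu|>|\nu|$, then $x\mapsto \mathbf{L}_\mu(x)/\tilde{t}_{\mu,\nu}(x)$ is strictly increasing on $(0,\infty)$. If $\mu>-\frac{3}{2}$ and $|\mu|<|\nu|<\mu+3$, then $x\mapsto \mathbf{L}_\mu(x)/\tilde{t}_{\mu,\nu}(x)$ is strictly decreasing on $(0,\infty)$.
   Context: For real $\mu,\nu$ the (normalized) modified Lommel function of the first kind is $$\tilde{t}_{\mu,\nu}(x)=\sum_{k=0}^\infty\frac{(\frac{1}{2}x)^{\mu+2k+1}}{\Gamma\big(k+\frac{\mu-\nu+3}{2}\big)\Gamma\big(k+\frac{\mu+\nu+3}{2}\big)},\quad x>0,$$ and the modified Struve function of the first kind is $$\mathbf{L}_\mu(x)=\sum_{k=0}^\infty\frac{(\frac{1}{2}x)^{2k+\mu+1}}{\Gamma(k+\frac{3}{2})\Gamma(k+\mu+\frac{3}{2})}.$$ *)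

theory Defs
  imports "HOL-Analysis.Analysis"
begin

text \<open>Normalized modified Lommel function of the first kind. Reciprocal Gamma is
  written with rGamma (= 1/Gamma, taking value 0 at the poles).\<close>
definition lommel_t :: "real \<Rightarrow> real \<Rightarrow> real \<Rightarrow> real" where
  "lommel_t \<mu> \<nu> x = (\<Sum>k. (x / 2) powr (\<mu> + 2 * real k + 1)
      * rGamma (real k + (\<mu> - \<nu> + 3) / 2) * rGamma (real k + (\<mu> + \<nu> + 3) / 2))"

definition struve_L :: "real \<Rightarrow> real \<Rightarrow> real" where
  "struve_L \<mu> x = (\<Sum>k. (x / 2) powr (2 * real k + \<mu> + 1)
      * rGamma (real k + 3 / 2) * rGamma (real k + \<mu> + 3 / 2))"

end

theory Submission
  imports Defs
begin

lemma summ_rec: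
  fixes a :: "nat \<Rightarrow> real" and p q y :: real
  assumes pos: "\<And>k. a k > 0" and rec: "\<And>k. a (Suc k) * ((real k+p)*(real k+q)) = a k"
    and p: "p > 0" and q: "q > 0" and y: "y \<ge> 0"
  shows "summable (\<lambda>k. a k * y^k)"
proof (rule summable_ratio_test[where c="1/2" and N="nat \<lceil>2*y\<rceil> + 1"])
  fix n assume n: "nat \<lceil>2*y\<rceil> + 1 \<le> n"
  have n1: "real n \<ge> 1" using n by simp
  have n2: "real n \<ge> 2*y" using n by linarith
  have "real n * real n \<le> (n+p)*(n+q)" using p q by (intro mult_mono) auto
  moreover have "real n \<le> real n * real n" using n1 by (simp add: mult_le_cancel_left1)
  ultimately have big: "2*y \<le> (n+p)*(n+q)" using n2 by linarith
  have dpos: "(n+p)*(n+q) > 0" using p q by simp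
  have as: "a (Suc n) = a n / ((n+p)*(n+q))" using rec[of n] dpos by (simp add: field_simps)
  have "norm (a (Suc n) * y ^ Suc n) = (a n * y^n) * (y / ((n+p)*(n+q)))"
    using pos[of n] y dpos p q by (simp add: as abs_mult mult_ac)
  also have "\<dots> \<le> (a n * y^n) * (1/2)"
    using big dpos pos[of n] y by (intro mult_left_mono) (auto simp: field_simps)
  also have "\<dots> = 1/2 * norm (a n * y^n)" using pos[of n] y by simp
  finally show "norm (a (Suc n) * y ^ Suc n) \<le> 1/2 * norm (a n * y^n)" .
qed simp

lemma coef_mono:
  fixes a b :: "nat \<Rightarrow> real" and p q r s :: real
  assumes apos: "\<And>k. a k > 0" and bpos: "\<And>k. b k > 0"
    and reca: "\<And>k. a (Suc k) * ((real k+p)*(real k+q)) = a k"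
    and recb: "\<And>k. b (Suc k) * ((real k+r)*(real k+s)) = b k"
    and p: "p > 0" and q: "q > 0" and r: "r > 0" and s: "s > 0"
    and psum: "p + q = r + s" and pprod: "r * s > p * q"
  shows "strict_mono (\<lambda>k. a k / b k)"
proof (rule strict_monoI_Suc)
  fix k
  have d1: "(real k+p)*(real k+q) > 0" using p q by simp
  have d2: "(real k+r)*(real k+s) > 0" using r s by simp
  have lt: "(real k+p)*(real k+q) < (real k+r)*(real k+s)"
  proof -
    have "(real k+r)*(real k+s) - (real k+p)*(real k+q) = r * s - p*q + real k*((r+s)-(p+q))" by algebra
    then show ?thesis using psum pprod by simp
  qed
  have key: "a (Suc k) / b (Suc k) = (a k / b k) * (((real k+r)*(real k+s)) / ((real k+p)*(real k+q)))"
  proof -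
    define D1 where "D1 = (real k+p)*(real k+q)"
    define D2 where "D2 = (real k+r)*(real k+s)"
    have e1: "a k = a (Suc k) * D1" using reca[of k] unfolding D1_def by simp
    have e2: "b k = b (Suc k) * D2" using recb[of k] unfolding D2_def by simp
    have "D1 > 0" "D2 > 0" using d1 d2 unfolding D1_def D2_def by auto
    then have "a (Suc k) / b (Suc k) = (a k / b k) * (D2 / D1)"
      unfolding e1 e2 using bpos[of "Suc k"] by (simp add: field_simps)
    then show ?thesis unfolding D1_def D2_def .
  qed
  have g1: "((real k+r)*(real k+s)) / ((real k+p)*(real k+q)) > 1" using lt d1 by simp
  have g0: "a k / b k > 0" using apos bpos by simp
  have "a k / b k * 1 < a k / b k * (((real k+r)*(real k+s)) / ((real k+p)*(real k+q)))"
    by (rule mult_strict_left_mono[OF g1 g0])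
  then show "a k / b k < a (Suc k) / b (Suc k)" unfolding key by simp
qed

lemma pair_nonneg:
  fixes a b :: "nat \<Rightarrow> real"
  assumes bpos: "\<And>k. b k > 0" and c: "strict_mono (\<lambda>k. a k / b k)"
    and y: "0 < y" and yz: "y < z" and ij: "j \<le> i"
  shows "0 \<le> (a i * b j - a j * b i) * (z^i * y^j - y^i * z^j)"
proof -
  have "a j / b j \<le> a i / b i" using strict_mono_less_eq[OF c] ij by blast
  then have "a j * b i \<le> a i * b j" using bpos[of i] bpos[of j] by (simp add: field_simps)
  moreover have "y^i * z^j \<le> z^i * y^j"
  proof -
    have "y^(i-j) \<le> z^(i-j)" using y yz by (intro power_mono) auto
    then have "y^(i-j) * (y^j * z^j) \<le> z^(i-j) * (y^j * z^j)" using y yz by (intro mult_right_mono) auto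
    moreover have "y^i = y^(i-j) * y^j" "z^i = z^(i-j) * z^j" using ij by (simp_all add: power_add[symmetric])
    ultimately show ?thesis by (simp add: mult_ac)
  qed
  ultimately show ?thesis by simp
qed

lemma ratio_mono:
  fixes a b :: "nat \<Rightarrow> real"
  assumes apos: "\<And>k. a k > 0" and bpos: "\<And>k. b k > 0"
    and sa: "\<And>y. y \<ge> 0 \<Longrightarrow> summable (\<lambda>k. a k * y^k)"
    and sb: "\<And>y. y \<ge> 0 \<Longrightarrow> summable (\<lambda>k. b k * y^k)"
    and c: "strict_mono (\<lambda>k. a k / b k)"
  shows "strict_mono_on {0<..} (\<lambda>y. (\<Sum>k. a k * y^k) / (\<Sum>k. b k * y^k))"
proof (rule strict_mono_onI)
  fix y z :: real assume y: "y \<in> {0<..}" and z: "z \<in> {0<..}" and yz: "y < z"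
  then have y0: "y > 0" and z0: "z > 0" by auto
  define p where "p i j = (a i * b j - a j * b i) * (z^i * y^j - y^i * z^j)" for i j
  define h where "h i j = a i * b j * (z^i * y^j - y^i * z^j)" for i j
  have psym: "p i j = p j i" for i j unfolding p_def by algebra
  have pnn: "0 \<le> p i j" for i j
  proof (cases "j \<le> i")
    case True then show ?thesis unfolding p_def using pair_nonneg[OF bpos c y0 yz] by blast
  next
    case False then have "i \<le> j" by simp
    then show ?thesis using psym[of i j] unfolding p_def using pair_nonneg[OF bpos c y0 yz] by metis
  qed
  have p10: "p 1 0 > 0"
  proof -
    have "a 0 / b 0 < a 1 / b 1" using c unfolding strict_mono_def by simp
    then have "a 0 * b 1 < a 1 * b 0" using bpos[of 0] bpos[of 1] by (simp add: field_simps)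
    then show ?thesis unfolding p_def using yz by simp
  qed
  define F where "F t n = (\<Sum>k<n. a k * t^k)" for t n
  define G where "G t n = (\<Sum>k<n. b k * t^k)" for t n
  define D where "D n = F z n * G y n - F y n * G z n" for n
  have phsum: "p i j = h i j + h j i" for i j unfolding p_def h_def by algebra
  have Dsum: "2 * D n = (\<Sum>i<n. \<Sum>j<n. p i j)" for n
  proof -
    have "(\<Sum>i<n. \<Sum>j<n. p i j) = (\<Sum>i<n. \<Sum>j<n. h i j) + (\<Sum>i<n. \<Sum>j<n. h j i)"
      unfolding phsum by (simp add: sum.distrib)
    also have "(\<Sum>i<n. \<Sum>j<n. h j i) = (\<Sum>i<n. \<Sum>j<n. h i j)" by (rule sum.swap)
    also have "(\<Sum>i<n. \<Sum>j<n. h i j) = D n"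
      unfolding D_def F_def G_def h_def sum_product
      by (simp add: sum_subtractf[symmetric] algebra_simps)
    finally show ?thesis by simp
  qed
  have Dlow: "D n \<ge> p 1 0" if n: "n \<ge> 2" for n
  proof -
    have "(\<Sum>i<n. \<Sum>j<n. p i j) = (\<Sum>(i,j)\<in>{..<n}\<times>{..<n}. p i j)"
      by (rule sum.cartesian_product)
    also have "\<dots> \<ge> (\<Sum>(i,j)\<in>{(0,1),(1,0)}. p i j)"
      by (rule sum_mono2) (use n pnn in auto)
    finally have "(\<Sum>i<n. \<Sum>j<n. p i j) \<ge> p 0 1 + p 1 0" by simp
    then show ?thesis using Dsum[of n] psym[of 0 1] by simp
  qed
  have Dlim: "D \<longlonglongrightarrow> (\<Sum>k. a k * z^k) * (\<Sum>k. b k * y^k) - (\<Sum>k. a k * y^k) * (\<Sum>k. b k * z^k)"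
    unfolding D_def F_def G_def
    by (intro tendsto_intros summable_LIMSEQ sa sb) (use y0 z0 in auto)
  have "p 1 0 \<le> (\<Sum>k. a k * z^k) * (\<Sum>k. b k * y^k) - (\<Sum>k. a k * y^k) * (\<Sum>k. b k * z^k)"
    by (rule LIMSEQ_le_const[OF Dlim]) (use Dlow in auto)
  then have diff: "(\<Sum>k. a k * y^k) * (\<Sum>k. b k * z^k) < (\<Sum>k. a k * z^k) * (\<Sum>k. b k * y^k)"
    using p10 by linarith
  have Gy: "(\<Sum>k. b k * y^k) > 0" by (rule suminf_pos) (use sb y0 bpos in auto)
  have Gz: "(\<Sum>k. b k * z^k) > 0" by (rule suminf_pos) (use sb z0 bpos in auto)
  show "(\<Sum>k. a k * y^k) / (\<Sum>k. b k * y^k) < (\<Sum>k. a k * z^k) / (\<Sum>k. b k * z^k)"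
    using diff Gy Gz by (simp add: divide_less_eq less_divide_eq mult_ac)
qed

lemma rGamma_pos': "x > 0 \<Longrightarrow> rGamma (x::real) > 0"
  by (simp add: rGamma_inverse_Gamma)

lemma rGamma_rec': "rGamma (real (Suc k) + c) * (real k + c) = rGamma (real k + c :: real)"
proof -
  have e: "real (Suc k) + c = (real k + c) + 1" by simp
  show ?thesis unfolding e using rGamma_plus1[of "real k + c"] by (simp only: mult.commute)
qed

lemma prod_rec:
  fixes c d :: real
  shows "rGamma (real (Suc k) + c) * rGamma (real (Suc k) + d) * ((real k + c) * (real k + d))
     = rGamma (real k + c) * rGamma (real k + d)"
  using rGamma_rec'[of k c] rGamma_rec'[of k d] by (simp add: mult_ac)

lemma powr_split:
  fixes x e :: real and k :: nat
  assumes "x > 0"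
  shows "(x/2) powr (2 * real k + e) = (x/2) powr e * ((x/2)^2)^k"
proof -
  have "(x/2) powr (2 * real k + e) = (x/2) powr (real (2*k)) * (x/2) powr e"
    by (simp add: powr_add)
  also have "(x/2) powr (real (2*k)) = ((x/2)^2)^k"
    using assms by (subst powr_realpow) (simp_all add: power_mult)
  finally show ?thesis by simp
qed

lemma two_series:
  fixes x e c d :: real
  assumes x: "x > 0" and c: "c > 0" and d: "d > 0"
  shows "(\<Sum>k. (x/2) powr (2 * real k + e) * rGamma (real k + c) * rGamma (real k + d))
    = (x/2) powr e * (\<Sum>k. (rGamma (real k + c) * rGamma (real k + d)) * ((x/2)^2)^k)"
    and "(\<Sum>k. (rGamma (real k + c) * rGamma (real k + d)) * ((x/2)^2)^k) > 0"
proof -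
  have sm: "summable (\<lambda>k. (rGamma (real k + c) * rGamma (real k + d)) * ((x/2)^2)^k)"
    by (rule summ_rec[where p=c and q=d]) (use c d rGamma_pos' prod_rec in auto)
  have "(\<Sum>k. (x/2) powr (2 * real k + e) * rGamma (real k + c) * rGamma (real k + d))
    = (\<Sum>k. (x/2) powr e * ((rGamma (real k + c) * rGamma (real k + d)) * ((x/2)^2)^k))"
    using powr_split[OF x] by (simp add: mult_ac)
  also have "\<dots> = (x/2) powr e * (\<Sum>k. (rGamma (real k + c) * rGamma (real k + d)) * ((x/2)^2)^k)"
    by (rule suminf_mult[OF sm])
  finally show "(\<Sum>k. (x/2) powr (2 * real k + e) * rGamma (real k + c) * rGamma (real k + d))
    = (x/2) powr e * (\<Sum>k. (rGamma (real k + c) * rGamma (real k + d)) * ((x/2)^2)^k)" .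
  show "(\<Sum>k. (rGamma (real k + c) * rGamma (real k + d)) * ((x/2)^2)^k) > 0"
    by (rule suminf_pos[OF sm]) (use x c d rGamma_pos' in auto)
qed

lemma struve_eq:
  assumes "x > 0" "\<mu> > -3/2"
  shows "struve_L \<mu> x = (x/2) powr (\<mu>+1) * (\<Sum>k. (rGamma (real k + 3/2) * rGamma (real k + (\<mu>+3/2))) * ((x/2)^2)^k)"
proof -
  have "struve_L \<mu> x = (\<Sum>k. (x/2) powr (2 * real k + (\<mu>+1)) * rGamma (real k + 3/2) * rGamma (real k + (\<mu>+3/2)))"
    unfolding struve_L_def by (simp add: add.assoc add_ac)
  then show ?thesis using two_series(1)[of x "3/2" "\<mu>+3/2" "\<mu>+1"] assms by simp
qed

lemma lommel_eq:
  assumes "x > 0" "(\<mu> - \<nu> + 3)/2 > 0" "(\<mu> + \<nu> + 3)/2 > 0"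
  shows "lommel_t \<mu> \<nu> x = (x/2) powr (\<mu>+1) * (\<Sum>k. (rGamma (real k + (\<mu> - \<nu> + 3)/2) * rGamma (real k + (\<mu> + \<nu> + 3)/2)) * ((x/2)^2)^k)"
proof -
  have "lommel_t \<mu> \<nu> x = (\<Sum>k. (x/2) powr (2 * real k + (\<mu>+1)) * rGamma (real k + (\<mu> - \<nu> + 3)/2) * rGamma (real k + (\<mu> + \<nu> + 3)/2))"
    unfolding lommel_t_def by (simp add: add_ac)
  then show ?thesis using two_series(1)[of x "(\<mu> - \<nu> + 3)/2" "(\<mu> + \<nu> + 3)/2" "\<mu>+1"] assms by simp
qed

theorem theorem3p2:
  fixes \<mu> \<nu> :: real
  shows "(\<mu> > -3/2 \<and> \<bar>\<mu>\<bar> > \<bar>\<nu>\<bar> \<longrightarrow>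
           strict_mono_on {0<..} (\<lambda>x. struve_L \<mu> x / lommel_t \<mu> \<nu> x))
       \<and> (\<mu> > -3/2 \<and> \<bar>\<mu>\<bar> < \<bar>\<nu>\<bar> \<and> \<bar>\<nu>\<bar> < \<mu> + 3 \<longrightarrow>
           strict_antimono_on {0<..} (\<lambda>x. struve_L \<mu> x / lommel_t \<mu> \<nu> x))"
proof -
  define a where "a = (\<lambda>k::nat. rGamma (real k + 3/2) * rGamma (real k + (\<mu>+3/2)))"
  define b where "b = (\<lambda>k::nat. rGamma (real k + (\<mu> - \<nu> + 3)/2) * rGamma (real k + (\<mu> + \<nu> + 3)/2))"
  define A where "A = (\<lambda>y::real. \<Sum>k. a k * y^k)"
  define B where "B = (\<lambda>y::real. \<Sum>k. b k * y^k)"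
  define f where "f = (\<lambda>x. struve_L \<mu> x / lommel_t \<mu> \<nu> x)"
  have common: "f x = A ((x/2)^2) / B ((x/2)^2)" "A ((x/2)^2) > 0" "B ((x/2)^2) > 0"
    if m: "\<mu> > -3/2" and nu: "\<bar>\<nu>\<bar> < \<mu> + 3" and x: "x > 0" for x
  proof -
    have al: "(\<mu> - \<nu> + 3)/2 > 0" "(\<mu> + \<nu> + 3)/2 > 0" using nu by (auto simp: abs_less_iff)
    have "(x/2) powr (\<mu>+1) > 0" using x by simp
    then show "f x = A ((x/2)^2) / B ((x/2)^2)"
      unfolding f_def A_def B_def a_def b_def using struve_eq[OF x m] lommel_eq[OF x al] by simp
    show "A ((x/2)^2) > 0" unfolding A_def a_def using two_series(2)[OF x, of "3/2" "\<mu>+3/2"] m by simp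
    show "B ((x/2)^2) > 0" unfolding B_def b_def using two_series(2)[OF x al] by simp
  qed
  have ysq: "0 < (x/2)^2 \<and> (x/2)^2 < (x'/2)^2" if "0 < x" "x < x'" for x x' :: real
    using that by (auto intro: power_strict_mono)
  have apos: "a k > 0" if "\<mu> > -3/2" for k unfolding a_def using that by (simp add: rGamma_pos')
  have bpos: "b k > 0" if "\<bar>\<nu>\<bar> < \<mu> + 3" for k
  proof -
    have "real k \<ge> 0" by simp
    then show ?thesis unfolding b_def using that
      by (intro mult_pos_pos rGamma_pos' add_nonneg_pos) (auto simp: abs_less_iff)
  qed
  have arec: "a (Suc k) * ((real k + 3/2) * (real k + (\<mu>+3/2))) = a k" for k
    unfolding a_def by (rule prod_rec)
  have brec: "b (Suc k) * ((real k + (\<mu> - \<nu> + 3)/2) * (real k + (\<mu> + \<nu> + 3)/2)) = b k" for k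
    unfolding b_def by (rule prod_rec)
  have sa: "summable (\<lambda>k. a k * y^k)" if "\<mu> > -3/2" "y \<ge> 0" for y
    by (rule summ_rec[OF apos arec]) (use that in auto)
  have sb: "summable (\<lambda>k. b k * y^k)" if "\<bar>\<nu>\<bar> < \<mu> + 3" "y \<ge> 0" for y
    by (rule summ_rec[OF bpos brec]) (use that in \<open>auto simp: abs_less_iff\<close>)
  have prodid: "((\<mu> - \<nu> + 3)/2) * ((\<mu> + \<nu> + 3)/2) - 3/2 * (\<mu>+3/2) = (\<mu>*\<mu> - \<nu>*\<nu>)/4"
    by (simp add: field_simps)
  show ?thesis
  proof (intro conjI impI)
    assume h: "-3/2 < \<mu> \<and> \<bar>\<nu>\<bar> < \<bar>\<mu>\<bar>"
    then have m: "\<mu> > -3/2" and nu: "\<bar>\<nu>\<bar> < \<mu> + 3" by (auto simp: abs_if split: if_splits)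
    have sq: "\<nu>*\<nu> < \<mu>*\<mu>"
      using mult_strict_mono[of "\<bar>\<nu>\<bar>" "\<bar>\<mu>\<bar>" "\<bar>\<nu>\<bar>" "\<bar>\<mu>\<bar>"] h by (auto simp add: abs_mult_self_eq)
    have cm: "strict_mono (\<lambda>k. a k / b k)"
    proof -
      have pq: "3/2 * (\<mu>+3/2) < (\<mu> - \<nu> + 3)/2 * ((\<mu> + \<nu> + 3)/2)"
      proof -
        have "(\<mu>*\<mu> - \<nu>*\<nu>)/4 > 0" using sq by simp
        then show ?thesis using prodid by linarith
      qed
      have se: "3/2 + (\<mu>+3/2) = (\<mu> - \<nu> + 3)/2 + (\<mu> + \<nu> + 3)/2" by (simp add: field_simps)
      show ?thesis
        by (rule coef_mono[OF apos[OF m] bpos[OF nu] arec brec _ _ _ _ se pq]) (use m nu in \<open>auto simp: abs_less_iff\<close>)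
    qed
    have R: "strict_mono_on {0<..} (\<lambda>y. A y / B y)"
      unfolding A_def B_def by (rule ratio_mono[OF apos[OF m] bpos[OF nu] sa[OF m] sb[OF nu] cm])
    show "strict_mono_on {0<..} (\<lambda>x. struve_L \<mu> x / lommel_t \<mu> \<nu> x)"
      unfolding f_def[symmetric]
    proof (rule monotone_onI)
      fix x x' :: real assume "x \<in> {0<..}" "x' \<in> {0<..}" "x < x'"
      then have "0 < x" "x < x'" by auto
      with ysq have "(x/2)^2 \<in> {0<..}" "(x'/2)^2 \<in> {0<..}" "(x/2)^2 < (x'/2)^2" by auto
      then have "A ((x/2)^2) / B ((x/2)^2) < A ((x'/2)^2) / B ((x'/2)^2)"
        using R by (simp add: monotone_on_def)
      then show "f x < f x'" using common(1)[OF m nu \<open>0 < x\<close>] common(1)[OF m nu, of x'] \<open>0<x\<close> \<open>x<x'\<close> by simp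
    qed
  next
    assume h: "-3/2 < \<mu> \<and> \<bar>\<mu>\<bar> < \<bar>\<nu>\<bar> \<and> \<bar>\<nu>\<bar> < \<mu> + 3"
    then have m: "\<mu> > -3/2" and nu: "\<bar>\<nu>\<bar> < \<mu> + 3" by auto
    have sq: "\<mu>*\<mu> < \<nu>*\<nu>"
      using mult_strict_mono[of "\<bar>\<mu>\<bar>" "\<bar>\<nu>\<bar>" "\<bar>\<mu>\<bar>" "\<bar>\<nu>\<bar>"] h by (auto simp add: abs_mult_self_eq)
    have cm: "strict_mono (\<lambda>k. b k / a k)"
    proof -
      have pq: "(\<mu> - \<nu> + 3)/2 * ((\<mu> + \<nu> + 3)/2) < 3/2 * (\<mu>+3/2)"
      proof -
        have "(\<mu>*\<mu> - \<nu>*\<nu>)/4 < 0" using sq by simp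
        then show ?thesis using prodid by linarith
      qed
      have se: "(\<mu> - \<nu> + 3)/2 + (\<mu> + \<nu> + 3)/2 = 3/2 + (\<mu>+3/2)" by (simp add: field_simps)
      show ?thesis
        by (rule coef_mono[OF bpos[OF nu] apos[OF m] brec arec _ _ _ _ se pq]) (use m nu in \<open>auto simp: abs_less_iff\<close>)
    qed
    have R: "strict_mono_on {0<..} (\<lambda>y. B y / A y)"
      unfolding A_def B_def by (rule ratio_mono[OF bpos[OF nu] apos[OF m] sb[OF nu] sa[OF m] cm])
    show "strict_antimono_on {0<..} (\<lambda>x. struve_L \<mu> x / lommel_t \<mu> \<nu> x)"
      unfolding f_def[symmetric]
    proof (rule monotone_onI)
      fix x x' :: real assume "x \<in> {0<..}" "x' \<in> {0<..}" "x < x'"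
      then have x0: "0 < x" and xx: "x < x'" by auto
      with ysq have "(x/2)^2 \<in> {0<..}" "(x'/2)^2 \<in> {0<..}" "(x/2)^2 < (x'/2)^2" by auto
      then have lt: "B ((x/2)^2) / A ((x/2)^2) < B ((x'/2)^2) / A ((x'/2)^2)"
        using R by (simp add: monotone_on_def)
      have x1: "0 < x'" using x0 xx by simp
      note c1 = common[OF m nu x0] and c2 = common[OF m nu x1]
      have "inverse (B ((x'/2)^2) / A ((x'/2)^2)) < inverse (B ((x/2)^2) / A ((x/2)^2))"
        by (rule less_imp_inverse_less[OF lt]) (use c1 in simp)
      then show "f x' < f x" unfolding c1(1) c2(1) by simp
    qed
  qed
qed

end
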